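(* Let $N\ge 2$, $\delta>0$, and let $a$ be a $C^2$ function on the ball $B'_\delta(0)\subset\mathbb{R}^{N-1}$ with $a(0)=0$, $\nabla a(0)=0$, and $a$ not identically zero on $B'_\delta(0)$. Let $(p_n)_n$ be a sequence in $\mathbb{R}^N$ such that for some constant $C$ and all $n$ and all $x'\in B'_\delta(0)$, $$|p_n\cdot(x',a(x'))|\le C.$$ Then $(p_n)_n$ is bounded. *)

theory Defs
  imports "HOL-Analysis.Analysis"
begin

definition C2_on :: "'a::euclidean_space set \<Rightarrow> ('a \<Rightarrow> real) \<Rightarrow> bool" where
  "C2_on S f \<longleftrightarrow>
     (\<exists>D :: 'a \<Rightarrow> ('a \<Rightarrow>\<^sub>L real). \<exists>D2 :: 'a \<Rightarrow> ('a \<Rightarrow>\<^sub>L ('a \<Rightarrow>\<^sub>L real)).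
        (\<forall>x\<in>S. (f has_derivative blinfun_apply (D x)) (at x)) \<and>
        (\<forall>x\<in>S. (D has_derivative blinfun_apply (D2 x)) (at x)) \<and>
        continuous_on S D2)"

end

theory Submission
  imports Defs
begin

theorem proposition3p1:
  fixes a :: "real ^ 'n \<Rightarrow> real"
    and \<delta> C :: real
    and p :: "nat \<Rightarrow> (real ^ 'n) \<times> real"
  assumes "\<delta> > 0"
    and "C2_on (ball 0 \<delta>) a"
    and "a 0 = 0"
    and "(a has_derivative (\<lambda>h. 0)) (at 0)"
    and "\<exists>x\<in>ball 0 \<delta>. a x \<noteq> 0"
    and "\<And>n x. x \<in> ball 0 \<delta> \<Longrightarrow> \<bar>p n \<bullet> (x, a x)\<bar> \<le> C"
  shows "bounded (range p)"
proof -
  note dpos = assms(1) and a0 = assms(3) and da0 = assms(4) and hC = assms(6)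
  obtain x0 where x0: "x0 \<in> ball 0 \<delta>" "a x0 \<noteq> 0" using assms(5) by blast
  define f where "f n x = fst (p n) \<bullet> x + snd (p n) * a x" for n x
  have fC: "\<bar>f n x\<bar> \<le> C" if "x \<in> ball 0 \<delta>" for n x
    using hC[OF that, of n] by (cases "p n") (simp add: f_def)
  have C0: "C \<ge> 0" using fC[of 0 0] dpos by simp
  obtain D where D: "\<forall>x\<in>ball 0 \<delta>. (a has_derivative blinfun_apply (D x)) (at x)"
    using assms(2) unfolding C2_on_def by blast
  have conta: "continuous_on (ball 0 \<delta>) a"
    using D has_derivative_continuous continuous_at_imp_continuous_on by blast
  have "compact (a ` cball 0 (\<delta>/2))"
    by (rule compact_continuous_image) (use conta dpos in \<open>auto intro: continuous_on_subset\<close>)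
  then obtain M where M: "\<And>x. x \<in> cball 0 (\<delta>/2) \<Longrightarrow> \<bar>a x\<bar> \<le> M"
    using compact_imp_bounded bounded_iff by (metis image_eqI real_norm_def)
  define g where "g t = a (t *\<^sub>R x0)" for t :: real
  have "((\<lambda>t. t *\<^sub>R x0) has_derivative (\<lambda>h. h *\<^sub>R x0)) (at 0)"
    by (auto intro!: derivative_eq_intros)
  from has_derivative_compose[OF this, of a "\<lambda>h. 0"] da0
  have "(g has_derivative (\<lambda>h. 0)) (at 0)" unfolding g_def[abs_def] by (simp add: o_def)
  hence "(g has_field_derivative 0) (at 0)"
  proof -
    have "(\<lambda>h::real. 0::real) = (*) 0" by auto
    thus ?thesis using \<open>(g has_derivative (\<lambda>h. 0)) (at 0)\<close>
      unfolding has_field_derivative_def by simp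
  qed
  hence lim: "((\<lambda>t. (g t - g 0) / (t - 0)) \<longlongrightarrow> 0) (at 0)"
    using has_field_derivative_iff by blast
  have "\<bar>a x0\<bar> / 2 > 0" using x0 by simp
  from lim[unfolded tendsto_iff, rule_format, OF this]
  have "\<forall>\<^sub>F t in at_right 0. \<bar>g t / t\<bar> < \<bar>a x0\<bar> / 2"
    using a0 by (simp add: g_def eventually_at_split)
  moreover have "\<forall>\<^sub>F t in at_right (0::real). t < 1 \<and> 0 < t"
    by (simp add: eventually_at_right_field) (rule exI[of _ 1], auto)
  ultimately have "\<forall>\<^sub>F t in at_right (0::real). \<bar>g t / t\<bar> < \<bar>a x0\<bar> / 2 \<and> t < 1 \<and> 0 < t"
    by eventually_elim auto
  then obtain t where t: "\<bar>g t / t\<bar> < \<bar>a x0\<bar> / 2" "t < 1" "0 < t"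
    using eventually_happens trivial_limit_at_right_real by blast
  have tx0: "t *\<^sub>R x0 \<in> ball 0 \<delta>"
    using x0 t by (simp add: mult_less_cancel_right1 norm_scaleR) (smt (verit) mult_left_le_one_le norm_ge_zero)
  define S where "S = 2 * (C + C / t) / \<bar>a x0\<bar>"
  have sB: "\<bar>snd (p n)\<bar> \<le> S" for n
  proof -
    let ?q = "fst (p n)" and ?s = "snd (p n)"
    have e: "f n x0 - f n (t *\<^sub>R x0) / t = ?s * (a x0 - g t / t)"
      using t by (simp add: f_def g_def inner_scaleR_right field_simps)
    have "\<bar>f n x0 - f n (t *\<^sub>R x0) / t\<bar> \<le> C + C / t"
    proof -
      have "\<bar>f n (t *\<^sub>R x0) / t\<bar> \<le> C / t"
        using fC[OF tx0, of n] t by (simp add: abs_div divide_right_mono)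
      thus ?thesis using fC[OF x0(1), of n] by linarith
    qed
    moreover have "\<bar>a x0 - g t / t\<bar> \<ge> \<bar>a x0\<bar> / 2" using t by linarith
    ultimately have "\<bar>?s\<bar> * (\<bar>a x0\<bar> / 2) \<le> C + C / t"
      using e by (metis abs_ge_zero abs_mult mult_left_mono order_trans)
    thus ?thesis using x0 by (simp add: S_def field_simps)
  qed
  define Q where "Q = 2 * (C + S * \<bar>M\<bar>) / \<delta>"
  have qB: "norm (fst (p n)) \<le> Q" for n
  proof (cases "fst (p n) = 0")
    case True
    have "S \<ge> 0" using sB[of n] by linarith
    then show ?thesis using True C0 dpos by (simp add: Q_def)
  next
    case False
    let ?q = "fst (p n)" and ?s = "snd (p n)"
    define x where "x = (\<delta> / 2 / norm ?q) *\<^sub>R ?q"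
    have nx: "norm x = \<delta> / 2" using False dpos by (simp add: x_def norm_scaleR)
    hence xb: "x \<in> ball 0 \<delta>" "x \<in> cball 0 (\<delta>/2)" using dpos by auto
    have qx: "?q \<bullet> x = \<delta> / 2 * norm ?q"
      using False by (simp add: x_def inner_scaleR_right dot_square_norm power2_eq_square)
    have "\<bar>?s * a x\<bar> \<le> S * \<bar>M\<bar>"
      using sB[of n] M[OF xb(2)] by (simp add: abs_mult mult_mono')
    hence "\<delta> / 2 * norm ?q \<le> C + S * \<bar>M\<bar>"
      using fC[OF xb(1), of n] qx unfolding f_def by linarith
    thus ?thesis using dpos by (simp add: Q_def field_simps)
  qed
  show ?thesis unfolding bounded_iff
  proof (intro exI ballI)
    fix y assume "y \<in> range p"
    then obtain n where y: "y = p n" by blast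
    have "norm y \<le> norm (fst (p n)) + norm (snd (p n))"
      using norm_Pair_le[of "fst (p n)" "snd (p n)"] by (simp add: y)
    also have "\<dots> \<le> Q + S" using qB[of n] sB[of n] by simp
    finally show "norm y \<le> Q + S" .
  qed
qed

end
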